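(* Let $K\ge 1$ and $1\le K^{*}\le K$ be integers. Let $\alpha_1,\dots,\alpha_K$ be independent random variables with $\alpha_k\sim\mathrm{Bernoulli}(p_k)$, $p_k\in(0,1)$ for $k=1,\dots,K$, and write $\boldsymbol{\alpha}=(\alpha_1,\dots,\alpha_K)$. Let $R\in\{0,1\}$ be a response generated from the GDINA model (identity link) for an item whose required attributes are exactly the first $K^{*}$ attributes (i.e. its $Q$-matrix row is $\mathbf{q}=(1,\dots,1,0,\dots,0)$ with $K^{*}$ ones): $$P(R=1\mid\boldsymbol{\alpha})=\delta_0+\sum_{k=1}^{K^{*}}\delta_k\alpha_k+\sum_{1\le k<k'\le K^{*}}\delta_{kk'}\alpha_k\alpha_{k'}+\dots+\delta_{12\cdots K^{*}}\prod_{k=1}^{K^{*}}\alpha_k\in[0,1],$$ and assume the monotonicity condition: for every $k\in\{1,\dots,K^{*}\}$ and every configuration of the other attributes, acquiring attribute $\alpha_k$ (changing $\alpha_k$ from $0$ to $1$) strictly increases $P(R=1\mid\boldsymbol{\alpha})$. Then the mis-specified linear additive model of $R$ regressed on $(\alpha_1,\dots,\alpha_K)$ has mean function $\mathbb{E}^{*}[R\mid\boldsymbol{\alpha}]=\beta_0+\beta_1\alpha_1+\dots+\beta_K\alpha_K$ with $\beta_l\neq 0$ for $l=1,\dots,K^{*}$ and $\beta_k=0$ for $k=K^{*}+1,\dots,K$.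
   Context: The mis-specified linear additive model's mean function $\mathbb{E}^{*}[R\mid\boldsymbol{\alpha}]$ denotes the population linear regression (least squares) mean function of $R$ on $\alpha_1,\dots,\alpha_K$ with an intercept, i.e. $\beta_0+\sum_{k=1}^K\beta_k\alpha_k$ where $(\beta_0,\dots,\beta_K)$ minimize $\mathbb{E}\big[(R-\beta_0-\sum_{k=1}^K\beta_k\alpha_k)^2\big]$ under the joint distribution of $(\boldsymbol{\alpha},R)$ described. In the GDINA model, the sum runs over the intercept, main effects and all interaction terms among the required attributes $\alpha_1,\dots,\alpha_{K^{*}}$ with real coefficients. *)

theory Defs
  imports Complex_Main
begin

(* An attribute profile alpha = (alpha_1,...,alpha_K) in {0,1}^K is represented by the
   set A \<subseteq> {1..K} of mastered attributes: alpha_k = 1 iff k \<in> A. *)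

definition att :: "nat set \<Rightarrow> nat \<Rightarrow> real" where
  "att A k = (if k \<in> A then 1 else 0)"

definition prof_prob :: "nat \<Rightarrow> (nat \<Rightarrow> real) \<Rightarrow> nat set \<Rightarrow> real" where
  "prof_prob K p A = (\<Prod>k\<in>{1..K}. if k \<in> A then p k else 1 - p k)"

definition gdina :: "nat \<Rightarrow> (nat set \<Rightarrow> real) \<Rightarrow> nat set \<Rightarrow> real" where
  "gdina Ks \<delta> A = (\<Sum>S\<in>Pow {1..Ks}. \<delta> S * (\<Prod>k\<in>S. att A k))"

definition lin_pred :: "nat \<Rightarrow> real \<Rightarrow> (nat \<Rightarrow> real) \<Rightarrow> nat set \<Rightarrow> real" where
  "lin_pred K b0 b A = b0 + (\<Sum>k\<in>{1..K}. b k * att A k)"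

(* E[(R - b0 - sum_k b_k alpha_k)^2] under the joint law of (alpha, R), where
   P(R=1|alpha) = f alpha. *)
definition sq_loss :: "nat \<Rightarrow> (nat \<Rightarrow> real) \<Rightarrow> (nat set \<Rightarrow> real) \<Rightarrow> real \<Rightarrow> (nat \<Rightarrow> real) \<Rightarrow> real" where
  "sq_loss K p f b0 b = (\<Sum>A\<in>Pow {1..K}. prof_prob K p A *
      (f A * (1 - lin_pred K b0 b A)^2 + (1 - f A) * (0 - lin_pred K b0 b A)^2))"

definition is_pop_ls :: "nat \<Rightarrow> (nat \<Rightarrow> real) \<Rightarrow> (nat set \<Rightarrow> real) \<Rightarrow> real \<Rightarrow> (nat \<Rightarrow> real) \<Rightarrow> bool" where
  "is_pop_ls K p f b0 b = (\<forall>c0 c. sq_loss K p f b0 b \<le> sq_loss K p f c0 c)"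

end

theory Submission
  imports Defs
begin

definition pp :: "nat set \<Rightarrow> (nat \<Rightarrow> real) \<Rightarrow> nat set \<Rightarrow> real" where
  "pp S p A = (\<Prod>k\<in>S. if k \<in> A then p k else 1 - p k)"

lemma sum_Pow_split:
  assumes "finite S" "j \<in> S"
  shows "(\<Sum>A\<in>Pow S. h A) = (\<Sum>B\<in>Pow (S - {j}). h B + h (insert j B))"
proof -
  have S: "S = insert j (S - {j})" using assms by auto
  have P: "Pow S = Pow (S-{j}) \<union> insert j ` Pow (S-{j})"
    by (subst S, rule Pow_insert)
  have D: "Pow (S-{j}) \<inter> insert j ` Pow (S-{j}) = {}" by auto
  have I: "inj_on (insert j) (Pow (S-{j}))"
    unfolding inj_on_def by (metis Diff_iff PowD insert_ident singletonI subsetD)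
  have "(\<Sum>A\<in>Pow S. h A) = (\<Sum>A\<in>Pow (S-{j}). h A) + (\<Sum>A\<in>insert j ` Pow (S-{j}). h A)"
    unfolding P using assms(1) D by (intro sum.union_disjoint) auto
  also have "(\<Sum>A\<in>insert j ` Pow (S-{j}). h A) = (\<Sum>B\<in>Pow (S-{j}). h (insert j B))"
    using I by (simp add: sum.reindex)
  finally show ?thesis by (simp add: sum.distrib)
qed

lemma pp_ins:
  assumes "finite S" "j \<in> S"
  shows "pp S p (insert j B) = p j * pp (S-{j}) p B"
proof -
  have "pp S p (insert j B) = (if j \<in> insert j B then p j else 1 - p j) *
     (\<Prod>k\<in>S-{j}. if k \<in> insert j B then p k else 1 - p k)"
    unfolding pp_def using assms by (simp add: prod.remove)
  also have "(\<Prod>k\<in>S-{j}. if k \<in> insert j B then p k else 1 - p k) = pp (S-{j}) p B"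
    unfolding pp_def by (rule prod.cong) auto
  finally show ?thesis by simp
qed

lemma pp_noins:
  assumes "finite S" "j \<in> S" "j \<notin> B"
  shows "pp S p B = (1 - p j) * pp (S-{j}) p B"
proof -
  have "pp S p B = (if j \<in> B then p j else 1 - p j) *
     (\<Prod>k\<in>S-{j}. if k \<in> B then p k else 1 - p k)"
    unfolding pp_def using assms by (simp add: prod.remove)
  then show ?thesis using assms unfolding pp_def by simp
qed

lemma E_split:
  assumes "finite S" "j \<in> S"
  shows "(\<Sum>A\<in>Pow S. pp S p A * h A) =
    (\<Sum>B\<in>Pow (S-{j}). pp (S-{j}) p B * ((1 - p j) * h B + p j * h (insert j B)))"
  unfolding sum_Pow_split[OF assms]
proof (rule sum.cong)
  fix B assume "B \<in> Pow (S - {j})"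
  then have "j \<notin> B" by auto
  then show "pp S p B * h B + pp S p (insert j B) * h (insert j B) =
    pp (S-{j}) p B * ((1 - p j) * h B + p j * h (insert j B))"
    unfolding pp_ins[OF assms] pp_noins[OF assms \<open>j \<notin> B\<close>] by (simp add: algebra_simps)
qed simp

lemma E_one: "finite S \<Longrightarrow> (\<Sum>A\<in>Pow S. pp S p A) = 1"
proof (induction S rule: finite_induct)
  case empty
  then show ?case by (simp add: pp_def)
next
  case (insert x F)
  have "(\<Sum>A\<in>Pow (insert x F). pp (insert x F) p A * 1) =
    (\<Sum>B\<in>Pow F. pp F p B * ((1 - p x) * 1 + p x * 1))"
    using E_split[of "insert x F" x p "\<lambda>_. 1"] insert by simp
  then show ?case using insert by simp
qed

lemma E_att: "finite S \<Longrightarrow> i \<in> S \<Longrightarrow> (\<Sum>A\<in>Pow S. pp S p A * att A i) = p i"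
proof -
  assume a: "finite S" "i \<in> S"
  have "(\<Sum>A\<in>Pow S. pp S p A * att A i) =
    (\<Sum>B\<in>Pow (S-{i}). pp (S-{i}) p B * ((1 - p i) * att B i + p i * att (insert i B) i))"
    by (rule E_split[OF a])
  also have "\<dots> = (\<Sum>B\<in>Pow (S-{i}). pp (S-{i}) p B) * p i"
    unfolding sum_distrib_right by (rule sum.cong) (auto simp: att_def)
  finally show ?thesis using E_one[of "S-{i}" p] a by simp
qed

lemma E_att2: "finite S \<Longrightarrow> i \<in> S \<Longrightarrow> j \<in> S \<Longrightarrow> i \<noteq> j \<Longrightarrow>
   (\<Sum>A\<in>Pow S. pp S p A * (att A j * att A i)) = p j * p i"
proof -
  assume a: "finite S" "i \<in> S" "j \<in> S" "i \<noteq> j"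
  have "(\<Sum>A\<in>Pow S. pp S p A * (att A j * att A i)) =
    (\<Sum>B\<in>Pow (S-{j}). pp (S-{j}) p B * ((1 - p j) * (att B j * att B i)
       + p j * (att (insert j B) j * att (insert j B) i)))"
    by (rule E_split[OF a(1,3)])
  also have "\<dots> = p j * (\<Sum>B\<in>Pow (S-{j}). pp (S-{j}) p B * att B i)"
    unfolding sum_distrib_left by (rule sum.cong) (use a in \<open>auto simp: att_def\<close>)
  also have "\<dots> = p j * p i" using E_att[of "S-{j}" i p] a by simp
  finally show ?thesis .
qed

lemma E_sq: "finite S \<Longrightarrow> i \<in> S \<Longrightarrow> j \<in> S \<Longrightarrow>
   (\<Sum>A\<in>Pow S. pp S p A * (att A j * att A i)) = p j * p i + (if i = j then p i - p i * p i else 0)"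
proof -
  assume a: "finite S" "i \<in> S" "j \<in> S"
  show ?thesis
  proof (cases "i = j")
    case True
    have "(\<Sum>A\<in>Pow S. pp S p A * (att A j * att A i)) = (\<Sum>A\<in>Pow S. pp S p A * att A i)"
      using True by (intro sum.cong) (auto simp: att_def)
    then show ?thesis using E_att[OF a(1,2)] True by simp
  next
    case False
    then show ?thesis using E_att2[OF a] by simp
  qed
qed

lemma gdina_local:
  assumes "j \<notin> {1..Ks}"
  shows "gdina Ks \<delta> (insert j B) = gdina Ks \<delta> B"
  unfolding gdina_def
proof (rule sum.cong)
  fix S assume "S \<in> Pow {1..Ks}"
  then have "j \<notin> S" using assms by auto
  then have "(\<Prod>k\<in>S. att (insert j B) k) = (\<Prod>k\<in>S. att B k)"
    by (intro prod.cong) (auto simp: att_def)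
  then show "\<delta> S * (\<Prod>k\<in>S. att (insert j B) k) = \<delta> S * (\<Prod>k\<in>S. att B k)" by simp
qed simp

lemma E_lin:
  "(\<Sum>A\<in>Pow U. w A * (g A * lin_pred K c0 c A)) =
    c0 * (\<Sum>A\<in>Pow U. w A * g A) + (\<Sum>k\<in>{1..K}. c k * (\<Sum>A\<in>Pow U. w A * (g A * att A k)))"
proof -
  have "(\<Sum>A\<in>Pow U. w A * (g A * lin_pred K c0 c A)) =
     (\<Sum>A\<in>Pow U. c0 * (w A * g A) + (\<Sum>k\<in>{1..K}. c k * (w A * (g A * att A k))))"
    unfolding lin_pred_def by (rule sum.cong) (auto simp: algebra_simps sum_distrib_left)
  also have "\<dots> = c0 * (\<Sum>A\<in>Pow U. w A * g A) + (\<Sum>k\<in>{1..K}. c k * (\<Sum>A\<in>Pow U. w A * (g A * att A k)))"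
    by (simp add: sum.distrib sum_distrib_left[symmetric]) (subst sum.swap, simp add: sum_distrib_left)
  finally show ?thesis .
qed

lemma lin_add: "lin_pred K c0 c A = lin_pred K b0 b A + lin_pred K (c0 - b0) (\<lambda>k. c k - b k) A"
  unfolding lin_pred_def by (simp add: sum.distrib[symmetric] algebra_simps)

lemma pp_pos: "finite S \<Longrightarrow> (\<And>k. k \<in> S \<Longrightarrow> 0 < p k \<and> p k < 1) \<Longrightarrow> 0 < pp S p A"
  unfolding pp_def by (intro prod_pos) auto

theorem proposition2:
  fixes K Ks :: nat and p :: "nat \<Rightarrow> real" and \<delta> :: "nat set \<Rightarrow> real"
  assumes "1 \<le> K" and "1 \<le> Ks" and "Ks \<le> K"
    and "\<And>k. k \<in> {1..K} \<Longrightarrow> 0 < p k \<and> p k < 1"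
    and "\<And>A. A \<subseteq> {1..K} \<Longrightarrow> 0 \<le> gdina Ks \<delta> A \<and> gdina Ks \<delta> A \<le> 1"
    and "\<And>k A. k \<in> {1..Ks} \<Longrightarrow> A \<subseteq> {1..K} - {k} \<Longrightarrow>
           gdina Ks \<delta> A < gdina Ks \<delta> (insert k A)"
  shows "(\<exists>b0 b. is_pop_ls K p (gdina Ks \<delta>) b0 b) \<and>
         (\<forall>b0 b. is_pop_ls K p (gdina Ks \<delta>) b0 b \<longrightarrow>
            (\<forall>l\<in>{1..Ks}. b l \<noteq> 0) \<and> (\<forall>k\<in>{Ks+1..K}. b k = 0))"
proof -
  define U where "U = {1..K}"
  define f where "f = gdina Ks \<delta>"
  define w where "w = pp U p"
  define Ef where "Ef = (\<Sum>A\<in>Pow U. w A * f A)"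
  define bs where "bs j = (\<Sum>B\<in>Pow (U-{j}). pp (U-{j}) p B * (f (insert j B) - f B))" for j
  define b0s where "b0s = Ef - (\<Sum>k\<in>U. p k * bs k)"
  define L where "L = lin_pred K b0s bs"
  have fin: "finite U" unfolding U_def by simp
  have pr: "prof_prob K p = w" unfolding w_def U_def by (rule ext) (simp add: prof_prob_def pp_def)
  have wpos: "0 < w A" for A unfolding w_def using assms(4) fin by (intro pp_pos) (auto simp: U_def)
  have cov: "(\<Sum>A\<in>Pow U. w A * (att A j * f A)) = p j * Ef + p j * (1 - p j) * bs j" if j: "j \<in> U" for j
  proof -
    have "(\<Sum>A\<in>Pow U. w A * (att A j * f A)) =
       (\<Sum>B\<in>Pow (U-{j}). pp (U-{j}) p B * ((1 - p j) * (att B j * f B) + p j * (att (insert j B) j * f (insert j B))))"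
      unfolding w_def by (rule E_split[OF fin j])
    also have "\<dots> = (\<Sum>B\<in>Pow (U-{j}). pp (U-{j}) p B * (p j * f (insert j B)))"
      by (rule sum.cong) (auto simp: att_def)
    finally have 1: "(\<Sum>A\<in>Pow U. w A * (att A j * f A)) = (\<Sum>B\<in>Pow (U-{j}). pp (U-{j}) p B * (p j * f (insert j B)))" .
    have 2: "Ef = (\<Sum>B\<in>Pow (U-{j}). pp (U-{j}) p B * ((1 - p j) * f B + p j * f (insert j B)))"
      unfolding Ef_def w_def by (rule E_split[OF fin j])
    show ?thesis unfolding 1 2 bs_def sum_distrib_left
      by (simp add: sum.distrib[symmetric] algebra_simps)
  qed
  have Eatt: "(\<Sum>A\<in>Pow U. w A * (1 * att A k)) = p k" if "k \<in> U" for k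
    using E_att[OF fin that] unfolding w_def by simp
  have Eone: "(\<Sum>A\<in>Pow U. w A * 1) = 1" using E_one[OF fin] unfolding w_def by simp
  have N0: "(\<Sum>A\<in>Pow U. w A * (1 * (L A - f A))) = 0"
  proof -
    have "(\<Sum>A\<in>Pow U. w A * (1 * (L A - f A))) = (\<Sum>A\<in>Pow U. w A * (1 * L A)) - Ef"
      unfolding Ef_def by (simp add: sum_subtractf[symmetric] algebra_simps)
    also have "(\<Sum>A\<in>Pow U. w A * (1 * L A)) = b0s + (\<Sum>k\<in>U. bs k * p k)"
      unfolding L_def E_lin Eone using Eatt by (simp add: U_def)
    finally show ?thesis unfolding b0s_def by (simp add: mult.commute)
  qed
  have Nj: "(\<Sum>A\<in>Pow U. w A * (att A j * (L A - f A))) = 0" if j: "j \<in> U" for j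
  proof -
    have "(\<Sum>A\<in>Pow U. w A * (att A j * (L A - f A))) = (\<Sum>A\<in>Pow U. w A * (att A j * L A)) - (\<Sum>A\<in>Pow U. w A * (att A j * f A))"
      by (simp add: sum_subtractf[symmetric] algebra_simps)
    also have "(\<Sum>A\<in>Pow U. w A * (att A j * L A)) =
        b0s * p j + (\<Sum>k\<in>U. bs k * (p j * p k + (if k = j then p k - p k * p k else 0)))"
      unfolding L_def E_lin using E_att[OF fin j] E_sq[OF fin _ j] unfolding w_def U_def
      by (simp add: mult.commute)
    also have "(\<Sum>k\<in>U. bs k * (p j * p k + (if k = j then p k - p k * p k else 0))) =
        p j * (\<Sum>k\<in>U. p k * bs k) + bs j * (p j - p j * p j)"
    proof -
      have "(\<Sum>k\<in>U. bs k * (p j * p k + (if k = j then p k - p k * p k else 0))) =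
         (\<Sum>k\<in>U. p j * (p k * bs k)) + (\<Sum>k\<in>U. (if k = j then bs k * (p k - p k * p k) else 0))"
        unfolding sum.distrib[symmetric] by (rule sum.cong) (auto simp: algebra_simps)
      also have "(\<Sum>k\<in>U. (if k = j then bs k * (p k - p k * p k) else 0)) = bs j * (p j - p j * p j)"
        using j fin by (simp add: sum.delta)
      finally show ?thesis by (simp add: sum_distrib_left)
    qed
    finally show ?thesis using cov[OF j] unfolding b0s_def by (simp add: algebra_simps)
  qed
  have orth: "(\<Sum>A\<in>Pow U. w A * (lin_pred K d0 d A * (L A - f A))) = 0" for d0 d
  proof -
    have "(\<Sum>A\<in>Pow U. w A * (lin_pred K d0 d A * (L A - f A))) = (\<Sum>A\<in>Pow U. w A * ((L A - f A) * lin_pred K d0 d A))"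
      by (simp add: mult.commute)
    also have "\<dots> = 0" unfolding E_lin using N0 Nj by (simp add: U_def mult.commute)
    finally show ?thesis .
  qed
  have ident: "sq_loss K p f c0 c = sq_loss K p f b0s bs +
     (\<Sum>A\<in>Pow U. w A * (lin_pred K (c0 - b0s) (\<lambda>k. c k - bs k) A)^2)" for c0 c
  proof -
    define D where "D = lin_pred K (c0 - b0s) (\<lambda>k. c k - bs k)"
    have pt: "w A * (f A * (1 - lin_pred K c0 c A)^2 + (1 - f A) * (0 - lin_pred K c0 c A)^2) =
       w A * (f A * (1 - L A)^2 + (1 - f A) * (0 - L A)^2) + w A * (D A)^2
       + 2 * (w A * (D A * (L A - f A)))" for A
      unfolding lin_add[of K c0 c A b0s bs] L_def[symmetric] D_def[symmetric]
      by (simp add: algebra_simps power2_eq_square)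
    have "sq_loss K p f c0 c = (\<Sum>A\<in>Pow U. w A * (f A * (1 - L A)^2 + (1 - f A) * (0 - L A)^2)) +
       (\<Sum>A\<in>Pow U. w A * (D A)^2) + 2 * (\<Sum>A\<in>Pow U. w A * (D A * (L A - f A)))"
      unfolding sq_loss_def pr pt sum.distrib sum_distrib_left U_def by simp
    also have "(\<Sum>A\<in>Pow U. w A * (D A * (L A - f A))) = 0" unfolding D_def by (rule orth)
    finally show ?thesis unfolding sq_loss_def pr L_def D_def U_def by simp
  qed
  have opt: "is_pop_ls K p f b0s bs"
    unfolding is_pop_ls_def
  proof (intro allI)
    fix c0 c
    have "0 \<le> (\<Sum>A\<in>Pow U. w A * (lin_pred K (c0 - b0s) (\<lambda>k. c k - bs k) A)^2)"
      using wpos by (intro sum_nonneg) (simp add: less_imp_le)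
    then show "sq_loss K p f b0s bs \<le> sq_loss K p f c0 c" using ident[of c0 c] by simp
  qed
  have uniq: "b k = bs k" if ls: "is_pop_ls K p f b0 b" and k: "k \<in> U" for b0 b k
  proof -
    define D where "D = lin_pred K (b0 - b0s) (\<lambda>k. b k - bs k)"
    have "sq_loss K p f b0 b \<le> sq_loss K p f b0s bs" using ls unfolding is_pop_ls_def by blast
    then have le: "(\<Sum>A\<in>Pow U. w A * (D A)^2) \<le> 0" using ident[of b0 b] unfolding D_def by simp
    have nn: "\<forall>A\<in>Pow U. 0 \<le> w A * (D A)^2" using wpos by (simp add: less_imp_le)
    have "(\<Sum>A\<in>Pow U. w A * (D A)^2) = 0" using le sum_nonneg[of "Pow U" "\<lambda>A. w A * (D A)^2"] nn by (meson antisym)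
    then have z: "\<forall>A\<in>Pow U. w A * (D A)^2 = 0" using sum_nonneg_eq_0_iff[of "Pow U" "\<lambda>A. w A * (D A)^2"] nn fin by simp
    have D0: "D A = 0" if "A \<subseteq> U" for A using z that wpos[of A] by force
    have "D {} = b0 - b0s" unfolding D_def lin_pred_def by (simp add: att_def)
    moreover have "D {k} = (b0 - b0s) + (b k - bs k)"
      unfolding D_def lin_pred_def using k unfolding U_def
      by (simp add: att_def if_distrib sum.delta cong: if_cong)
    ultimately show ?thesis using D0[of "{}"] D0[of "{k}"] k by simp
  qed
  have bpos: "bs j \<noteq> 0" if j: "j \<in> {1..Ks}" for j
  proof -
    have jU: "j \<in> U" using j assms(3) unfolding U_def by auto
    have "0 < bs j" unfolding bs_def
    proof (rule sum_pos)
      show "finite (Pow (U - {j}))" using fin by simp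
      show "Pow (U - {j}) \<noteq> {}" by auto
      fix B assume B: "B \<in> Pow (U - {j})"
      have "0 < pp (U-{j}) p B" using fin assms(4) by (intro pp_pos) (auto simp: U_def)
      moreover have "f B < f (insert j B)" unfolding f_def using assms(6)[OF j] B U_def by auto
      ultimately show "0 < pp (U - {j}) p B * (f (insert j B) - f B)" by simp
    qed
    then show ?thesis by simp
  qed
  have bzero: "bs j = 0" if j: "j \<in> {Ks+1..K}" for j
  proof -
    have "j \<notin> {1..Ks}" using j by auto
    then show ?thesis unfolding bs_def f_def using gdina_local by simp
  qed
  show ?thesis
  proof
    show "\<exists>b0 b. is_pop_ls K p (gdina Ks \<delta>) b0 b" using opt unfolding f_def by blast
  next
    show "\<forall>b0 b. is_pop_ls K p (gdina Ks \<delta>) b0 b \<longrightarrow>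
            (\<forall>l\<in>{1..Ks}. b l \<noteq> 0) \<and> (\<forall>k\<in>{Ks+1..K}. b k = 0)"
    proof (intro allI impI conjI ballI)
      fix b0 b l assume ls: "is_pop_ls K p (gdina Ks \<delta>) b0 b" and l: "l \<in> {1..Ks}"
      then have "l \<in> U" using assms(3) unfolding U_def by auto
      then show "b l \<noteq> 0" using uniq[of b0 b l] ls bpos[OF l] unfolding f_def by simp
    next
      fix b0 b k assume ls: "is_pop_ls K p (gdina Ks \<delta>) b0 b" and k: "k \<in> {Ks+1..K}"
      then have "k \<in> U" unfolding U_def by auto
      then show "b k = 0" using uniq[of b0 b k] ls bzero[OF k] unfolding f_def by simp
    qed
  qed
qed

end
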